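(* Let $n\ge 1$ be an integer, $a>0$, and let $a_0,\dots,a_{n-1}:((-a,a)\setminus\{0\})\times\mathbb{K}\to\mathbb{K}$ be arbitrary functions, where $\mathbb{K}=\mathbb{R}$ or $\mathbb{C}$. Let $f\in C^\infty(-a,a)$ be a solution of $$f^{(n)}(x)+a_{n-1}(x,f(x))f^{(n-1)}(x)+\cdots+a_0(x,f(x))f(x)=0,\qquad x\in(-a,a)\setminus\{0\},$$ satisfying $f(0)=f'(0)=\cdots=f^{(n-1)}(0)=0$. If there are $M>0$ and $\eta\in(0,a)$ such that $|a_k(x,f(x))|\le M$ for all $0<|x|<\eta$ and $k=0,1,\dots,n-1$, then there exists $\delta>0$ such that $f\equiv 0$ on $[-\delta,\delta]$.
   Context: The coefficients may be singular at $x=0$; the equation is only required to hold for $x\neq 0$. *)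

theory Defs
  imports "HOL-Analysis.Analysis"
begin

fun nth_deriv :: "nat \<Rightarrow> (real \<Rightarrow> 'k::real_normed_vector) \<Rightarrow> real \<Rightarrow> 'k" where
  "nth_deriv 0 f = f"
| "nth_deriv (Suc k) f = (\<lambda>x. vector_derivative (nth_deriv k f) (at x))"

definition smooth_on_interval :: "real \<Rightarrow> (real \<Rightarrow> 'k::real_normed_vector) \<Rightarrow> bool" where
  "smooth_on_interval a f \<longleftrightarrow>
     (\<forall>k. \<forall>x\<in>{-a<..<a}. nth_deriv k f differentiable (at x))"

text \<open>The statement of Corollary 3 for a fixed scalar field K (the type 'k).
  The coefficients A k x y stand for a_k(x,y); only their values for
  x in (-a,a) minus {0} are used.\<close>
definition corollary3_claim :: "'k::real_normed_field itself \<Rightarrow> bool" where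
  "corollary3_claim (_ :: 'k itself) \<longleftrightarrow>
    (\<forall>(n::nat) (a::real) (A :: nat \<Rightarrow> real \<Rightarrow> 'k \<Rightarrow> 'k) (f :: real \<Rightarrow> 'k) (M::real) (\<eta>::real).
       n \<ge> 1 \<longrightarrow> a > 0 \<longrightarrow>
       smooth_on_interval a f \<longrightarrow>
       (\<forall>x\<in>{-a<..<a}. x \<noteq> 0 \<longrightarrow>
          nth_deriv n f x + (\<Sum>k<n. A k x (f x) * nth_deriv k f x) = 0) \<longrightarrow>
       (\<forall>k<n. nth_deriv k f 0 = 0) \<longrightarrow>
       M > 0 \<longrightarrow> 0 < \<eta> \<longrightarrow> \<eta> < a \<longrightarrow>
       (\<forall>x. 0 < \<bar>x\<bar> \<and> \<bar>x\<bar> < \<eta> \<longrightarrow> (\<forall>k<n. norm (A k x (f x)) \<le> M)) \<longrightarrow>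
       (\<exists>\<delta>>0. \<forall>x\<in>{-\<delta>..\<delta>}. f x = 0))"

end

theory Submission
  imports Defs
begin

lemma mvb:
  fixes g :: "real \<Rightarrow> 'k::real_normed_vector"
  assumes "a < b" "continuous_on {a..b} g"
    "\<And>x. a < x \<Longrightarrow> x < b \<Longrightarrow> (g has_vector_derivative g' x) (at x)"
    "\<And>x. a < x \<Longrightarrow> x < b \<Longrightarrow> norm (g' x) \<le> B"
  shows "norm (g b - g a) \<le> B * (b - a)"
proof -
  have "norm (g b - g a) \<le> B * b - B * a"
    by (rule differentiable_bound_general[where \<phi>="\<lambda>x. B * x" and \<phi>'="\<lambda>x. B" and f'=g'])
       (use assms in \<open>auto intro!: continuous_intros derivative_eq_intros
          simp: has_real_derivative_iff_has_vector_derivative[symmetric]\<close>)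
  thus ?thesis by (simp add: algebra_simps)
qed

lemma main: "corollary3_claim TYPE('k::real_normed_field)"
  unfolding corollary3_claim_def
proof (intro allI impI)
  fix n :: nat and a :: real and A :: "nat \<Rightarrow> real \<Rightarrow> 'k \<Rightarrow> 'k" and f :: "real \<Rightarrow> 'k"
    and M \<eta> :: real
  assume n: "1 \<le> n" and a: "0 < a" and sm: "smooth_on_interval a f"
    and ode: "\<forall>x\<in>{-a<..<a}. x \<noteq> 0 \<longrightarrow>
          nth_deriv n f x + (\<Sum>k<n. A k x (f x) * nth_deriv k f x) = 0"
    and init: "\<forall>k<n. nth_deriv k f 0 = 0"
    and M: "M > 0" and e0: "0 < \<eta>" and e1: "\<eta> < a"
    and bnd: "\<forall>x. 0 < \<bar>x\<bar> \<and> \<bar>x\<bar> < \<eta> \<longrightarrow> (\<forall>k<n. norm (A k x (f x)) \<le> M)"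
  have der: "(nth_deriv k f has_vector_derivative nth_deriv (Suc k) f x) (at x)"
    if "x \<in> {-a<..<a}" for k x
    using sm[unfolded smooth_on_interval_def, rule_format, of x k] that
    by (simp add: vector_derivative_works)
  have cont: "continuous_on {-a<..<a} (nth_deriv k f)" for k
    using der by (intro continuous_at_imp_continuous_on) (meson greaterThanLessThan_iff has_vector_derivative_continuous)
  define S where "S t = (\<Sum>k<n. norm (nth_deriv k f t))" for t
  have S0: "0 \<le> S t" for t unfolding S_def by (simp add: sum_nonneg)
  have Sc: "continuous_on {-a<..<a} S"
    unfolding S_def by (intro continuous_intros cont)
  have Sle: "norm (nth_deriv k f t) \<le> S t" if "k < n" for k t
    unfolding S_def using that by (intro member_le_sum) auto
  have keyb: "norm (nth_deriv (Suc k) f x) \<le> (M+1) * S x"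
    if x: "0 < \<bar>x\<bar>" "\<bar>x\<bar> < \<eta>" and k: "k < n" for x k
  proof (cases "Suc k < n")
    case True
    have "norm (nth_deriv (Suc k) f x) \<le> S x" using Sle[OF True] .
    also have "\<dots> \<le> (M+1) * S x" using S0[of x] M by (simp add: mult_le_cancel_right1)
    finally show ?thesis .
  next
    case False
    hence kn: "Suc k = n" using k by simp
    have xi: "x \<in> {-a<..<a}" "x \<noteq> 0" using x e1 by auto
    have "nth_deriv n f x = - (\<Sum>j<n. A j x (f x) * nth_deriv j f x)"
      using ode xi by (simp add: eq_neg_iff_add_eq_0)
    hence "norm (nth_deriv n f x) = norm (\<Sum>j<n. A j x (f x) * nth_deriv j f x)" by simp
    also have "\<dots> \<le> (\<Sum>j<n. norm (A j x (f x) * nth_deriv j f x))" by (rule norm_sum)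
    also have "\<dots> \<le> (\<Sum>j<n. M * norm (nth_deriv j f x))"
      using bnd x by (intro sum_mono) (auto simp: norm_mult intro: mult_right_mono)
    also have "\<dots> = M * S x" unfolding S_def by (simp add: sum_distrib_left)
    also have "\<dots> \<le> (M+1) * S x" using S0[of x] by (simp add: mult_right_mono)
    finally show ?thesis using kn by simp
  qed
  define \<delta> where "\<delta> = min (\<eta>/2) (1/(2*real n*(M+1)))"
  have npos: "0 < real n" using n by simp
  have d0: "0 < \<delta>" unfolding \<delta>_def using e0 M npos by auto
  have d1: "\<delta> < \<eta>" unfolding \<delta>_def using e0 by auto
  have d2: "real n * \<delta> * (M+1) \<le> 1/2"
  proof -
    have "\<delta> \<le> 1/(2*real n*(M+1))" unfolding \<delta>_def by simp
    hence "real n * \<delta> * (M+1) \<le> real n * (1/(2*real n*(M+1))) * (M+1)"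
      using npos M by (intro mult_right_mono mult_left_mono) auto
    also have "\<dots> = 1/2"
    proof -
      have "real n * (M+1) \<noteq> 0" using npos M by simp
      thus ?thesis by (simp add: field_simps)
    qed
    finally show ?thesis .
  qed
  have sub: "{-\<delta>..\<delta>} \<subseteq> {-a<..<a}" using d1 e1 by auto
  obtain t0 where t0: "t0 \<in> {-\<delta>..\<delta>}" and t0max: "\<And>t. t \<in> {-\<delta>..\<delta>} \<Longrightarrow> S t \<le> S t0"
    using continuous_attains_sup[of "{-\<delta>..\<delta>}" S] continuous_on_subset[OF Sc sub] d0 by auto
  have ib: "norm (nth_deriv (Suc k) f x) \<le> (M+1) * S t0"
    if "0 < \<bar>x\<bar>" "\<bar>x\<bar> \<le> \<delta>" "k < n" for x k
  proof -
    have "norm (nth_deriv (Suc k) f x) \<le> (M+1) * S x" using keyb that d1 by auto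
    also have "\<dots> \<le> (M+1) * S t0" using t0max[of x] that M by (intro mult_left_mono) (auto simp: abs_le_iff)
    finally show ?thesis .
  qed
  have each: "norm (nth_deriv k f t0) \<le> \<delta> * ((M+1) * S t0)" if k: "k < n" for k
  proof -
    have B0: "0 \<le> (M+1) * S t0" using M S0[of t0] by simp
    have ctk: "continuous_on {-\<delta>..\<delta>} (nth_deriv k f)" using continuous_on_subset[OF cont sub] .
    consider "t0 = 0" | "t0 > 0" | "t0 < 0" by linarith
    thus ?thesis
    proof cases
      case 1 thus ?thesis using init k B0 d0 by simp
    next
      case 2
      have "norm (nth_deriv k f t0 - nth_deriv k f 0) \<le> ((M+1) * S t0) * (t0 - 0)"
        apply (rule mvb[OF 2])
        using continuous_on_subset[OF ctk] t0 apply auto[1]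
        using der sub t0 apply (force)
        using ib t0 k by auto
      also have "\<dots> \<le> ((M+1) * S t0) * \<delta>" using t0 B0 by (intro mult_left_mono) auto
      finally show ?thesis using init k by (simp add: mult.commute)
    next
      case 3
      have "norm (nth_deriv k f 0 - nth_deriv k f t0) \<le> ((M+1) * S t0) * (0 - t0)"
        apply (rule mvb[OF 3])
        using continuous_on_subset[OF ctk] t0 apply auto[1]
        using der sub t0 apply (force)
        using ib t0 k by auto
      also have "\<dots> \<le> ((M+1) * S t0) * \<delta>" using t0 B0 by (intro mult_left_mono) auto
      finally show ?thesis using init k by (simp add: mult.commute)
    qed
  qed
  have "S t0 \<le> (\<Sum>k<n. \<delta> * ((M+1) * S t0))"
    by (subst (1) S_def) (intro sum_mono each, simp)
  also have "\<dots> = (real n * \<delta> * (M+1)) * S t0" by simp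
  also have "\<dots> \<le> (1/2) * S t0" using d2 S0[of t0] by (intro mult_right_mono) auto
  finally have "S t0 \<le> 0" by simp
  show "\<exists>\<delta>>0. \<forall>x\<in>{-\<delta>..\<delta>}. f x = 0"
  proof (intro exI[of _ \<delta>] conjI ballI d0)
    fix x assume x: "x \<in> {-\<delta>..\<delta>}"
    have "norm (nth_deriv 0 f x) \<le> S x" using Sle[of 0 x] n by linarith
    also have "\<dots> \<le> 0" using t0max[OF x] \<open>S t0 \<le> 0\<close> by simp
    finally show "f x = 0" by simp
  qed
qed

theorem corollary3:
  shows "corollary3_claim TYPE(real) \<and> corollary3_claim TYPE(complex)"
  using main main by blast

end
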